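(* For every $n\ge 3$, the polynomial \[ Q_n(x) = x^{n} - 2(n-1)\sum_{j=1}^{n-1} x^{j} + 1 \] has a unique real root $\lambda_n$ larger than one. Moreover, for $n\ge 4$, \[ 2n-1 - \frac{1}{(2n-1)^{n-2}} < \lambda_n < 2n-1. \] *)

theory Defs
  imports Complex_Main "HOL-Computational_Algebra.Polynomial"
begin

definition Q :: "nat \<Rightarrow> real poly" where
  "Q n = monom 1 n - smult (2 * (real n - 1)) (\<Sum>j = 1..n-1. monom 1 j) + 1"

end

theory Submission
  imports Defs
begin

lemma my_rolle:
  fixes f f' :: "real \<Rightarrow> real"
  assumes d: "\<And>x. DERIV f x :> f' x" and ab: "a < b" and e: "f a = f b"
  shows "\<exists>z. a < z \<and> z < b \<and> f' z = 0"
proof -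
  have c: "continuous_on {a..b} f"
    by (intro continuous_at_imp_continuous_on ballI DERIV_isCont[OF d])
  obtain z where z: "a < z" "z < b" "DERIV f z :> 0"
    using Rolle[OF ab e c] d real_differentiable_def by blast
  then show ?thesis using DERIV_unique[OF d z(3)] by blast
qed

lemma geo_sum: "(\<Sum>j = 1..k. (x::real)^j) * (x - 1) = x^(k+1) - x"
  by (induction k) (auto simp: algebra_simps)

lemma polyQ:
  fixes x :: real
  assumes "n \<ge> 1"
  shows "poly (Q n) x * (x - 1) = x^(n+1) - (2*real n - 1) * x^n + (2*real n - 1) * x - 1"
proof -
  have p: "poly (Q n) x = x^n - 2*(real n - 1) * (\<Sum>j = 1..n-1. x^j) + 1"
    by (simp add: Q_def poly_monom poly_sum)
  have g: "(\<Sum>j = 1..n-1. x^j) * (x - 1) = x^n - x"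
    using geo_sum[where k="n-1" and x=x] assms by simp
  have "poly (Q n) x * (x - 1) = x^n * (x-1) - 2*(real n - 1) * ((\<Sum>j = 1..n-1. x^j) * (x - 1)) + (x - 1)"
    unfolding p by (simp add: algebra_simps)
  also have "\<dots> = x^(n+1) - (2*real n - 1) * x^n + (2*real n - 1) * x - 1"
    unfolding g by (simp add: algebra_simps)
  finally show ?thesis .
qed

theorem lemma6p4:
  fixes n :: nat
  assumes "n \<ge> 3"
  shows "(\<exists>!l::real. l > 1 \<and> poly (Q n) l = 0) \<and>
         (n \<ge> 4 \<longrightarrow> (\<forall>l::real. l > 1 \<and> poly (Q n) l = 0 \<longrightarrow>
             2 * real n - 1 - 1 / (2 * real n - 1) ^ (n - 2) < l \<and> l < 2 * real n - 1))"
proof -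
  define m where "m = 2 * real n - 1"
  have m5: "m \<ge> 5" using assms unfolding m_def by simp
  define p where "p = (\<lambda>x::real. x^(n+1) - m * x^n + m * x - 1)"
  define p' where "p' = (\<lambda>x::real. real (n+1) * x^n - m * real n * x^(n-1) + m)"
  define p'' where "p'' = (\<lambda>x::real. real (n+1) * real n * x^(n-1) - m * real n * real (n-1) * x^(n-2))"
  have PQ: "\<And>x. poly (Q n) x * (x - 1) = p x"
    using polyQ[of n] assms unfolding p_def m_def by auto
  obtain j where "n = 3 + j" using assms le_Suc_ex by blast
  then obtain k where n3: "n = Suc (Suc (Suc k))" by simp
  have h1: "\<And>x::real. x * x^(n - Suc 0) = x^n"
    using assms by (cases n) simp_all
  have h2: "\<And>x::real. x * x^(n - 2) = x^(n - 1)"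
    using n3 by auto
  have d1: "\<And>x. DERIV p x :> p' x"
    unfolding p_def p'_def
    by (auto intro!: derivative_eq_intros simp: algebra_simps h1)
  have d2: "\<And>x. DERIV p' x :> p'' x"
    unfolding p'_def p''_def
    by (auto intro!: derivative_eq_intros simp: algebra_simps h1 h2 numeral_2_eq_2)
  have p''pos: "\<And>w. w > 0 \<Longrightarrow> p'' w = 0 \<Longrightarrow> w = m * real (n-1) / real (n+1)"
  proof -
    fix w :: real assume w: "w > 0" "p'' w = 0"
    have "w^(n-1) = w * w^(n-2)" using h2[of w] by simp
    hence "p'' w = real n * w^(n-2) * (real (n+1) * w - m * real (n-1))"
      unfolding p''_def by (simp add: algebra_simps)
    moreover have "real n * w^(n-2) \<noteq> 0" using w assms by simp
    ultimately have "real (n+1) * w = m * real (n-1)" using w by simp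
    thus "w = m * real (n-1) / real (n+1)" by (simp add: field_simps)
  qed
  have recip: "\<And>a. a > 0 \<Longrightarrow> p a = 0 \<Longrightarrow> p (1/a) = 0"
  proof -
    fix a :: real assume a: "a > 0" "p a = 0"
    have "p (1/a) * a^(n+1) = - p a"
      unfolding p_def using a(1) by (simp add: field_simps power_divide)
    thus "p (1/a) = 0" using a by simp
  qed
  have root_iff: "\<And>x. x > 1 \<Longrightarrow> poly (Q n) x = 0 \<longleftrightarrow> p x = 0"
    using PQ by (metis diff_gt_0_iff_gt mult_eq_0_iff order_less_irrefl)
  have uniq: "\<And>a b. 1 < a \<Longrightarrow> a < b \<Longrightarrow> p a = 0 \<Longrightarrow> p b = 0 \<Longrightarrow> False"
  proof -
    fix a b :: real assume ab: "1 < a" "a < b" "p a = 0" "p b = 0"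
    have p1: "p 1 = 0" unfolding p_def by simp
    have pa': "p (1/a) = 0" using recip ab by simp
    have ia: "0 < 1/a" "1/a < 1" using ab by auto
    obtain z1 where z1: "1/a < z1" "z1 < 1" "p' z1 = 0" using my_rolle[OF d1 ia(2)] pa' p1 by auto
    obtain z2 where z2: "1 < z2" "z2 < a" "p' z2 = 0" using my_rolle[OF d1 ab(1)] p1 ab by auto
    obtain z3 where z3: "a < z3" "z3 < b" "p' z3 = 0" using my_rolle[OF d1 ab(2)] ab by auto
    obtain w1 where w1: "z1 < w1" "w1 < z2" "p'' w1 = 0"
      using my_rolle[OF d2, of z1 z2] z1 z2 by auto
    obtain w2 where w2: "z2 < w2" "w2 < z3" "p'' w2 = 0"
      using my_rolle[OF d2, of z2 z3] z2 z3 by auto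
    have "w1 = w2" using p''pos[of w1] p''pos[of w2] w1 w2 ia z1 by auto
    thus False using w1 w2 by simp
  qed
  have Q1: "poly (Q n) 1 < 0"
  proof -
    have "poly (Q n) 1 = 2 - 2*(real n - 1) * real (n - 1)"
      by (simp add: Q_def poly_monom poly_sum)
    also have "\<dots> < 0"
    proof -
      have r: "real (n-1) = real n - 1" using assms by (simp add: of_nat_diff)
      have "real n - 1 \<ge> 2" using assms by simp
      hence "(real n - 1)*(real n - 1) \<ge> 2*2" by (intro mult_mono) auto
      thus ?thesis unfolding r by (simp add: algebra_simps)
    qed
    finally show ?thesis .
  qed
  have Qm: "poly (Q n) m > 0"
  proof -
    have "p m = m * m - 1" unfolding p_def by simp
    moreover have "m * m \<ge> 5 * 5" using m5 by (intro mult_mono) auto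
    ultimately have "poly (Q n) m * (m - 1) > 0" using PQ[of m] by simp
    thus ?thesis using m5 by (simp add: zero_less_mult_iff)
  qed
  have upper: "\<And>l. l > 1 \<Longrightarrow> p l = 0 \<Longrightarrow> l < m"
  proof (rule ccontr)
    fix l :: real assume l: "l > 1" "p l = 0" "\<not> l < m"
    have "l^n * (l - m) \<ge> 0" using l by simp
    moreover have "p l = l^n * (l - m) + (m * l - 1)" unfolding p_def by (simp add: algebra_simps)
    moreover have "m * l - 1 > 0" using l m5 by (smt (verit) mult_le_cancel_left1)
    ultimately show False using l by linarith
  qed
  have ex: "\<exists>l. l > 1 \<and> poly (Q n) l = 0"
    using poly_IVT_pos[OF _ Q1 Qm] m5 by auto
  have uq: "\<And>a b. a > 1 \<and> poly (Q n) a = 0 \<Longrightarrow> b > 1 \<and> poly (Q n) b = 0 \<Longrightarrow> a = b"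
  proof -
    fix a b :: real assume a: "a > 1 \<and> poly (Q n) a = 0" and b: "b > 1 \<and> poly (Q n) b = 0"
    show "a = b"
    proof (rule ccontr)
      assume "a \<noteq> b"
      then consider "a < b" | "b < a" by linarith
      moreover have "p a = 0" "p b = 0" using root_iff a b by blast+
      ultimately show False using uniq[of a b] uniq[of b a] a b by blast
    qed
  qed
  have U: "\<exists>!l::real. l > 1 \<and> poly (Q n) l = 0"
    by (rule ex_ex1I[OF ex uq])
  have B: "n \<ge> 4 \<longrightarrow> (\<forall>l::real. l > 1 \<and> poly (Q n) l = 0 \<longrightarrow>
             2 * real n - 1 - 1 / (2 * real n - 1) ^ (n - 2) < l \<and> l < 2 * real n - 1)"
  proof (intro impI allI)
    fix l :: real assume n4: "n \<ge> 4" and l: "l > 1 \<and> poly (Q n) l = 0"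
    have ul: "l < m" using upper l root_iff by blast
    define E where "E = m^(n-2)"
    define e where "e = 1 / E"
    define y where "y = m - e"
    have Em: "E \<ge> m * m"
    proof -
      obtain j where "n = 4 + j" using n4 le_Suc_ex by blast
      hence "E = m * m * m^(n-4)" unfolding E_def by (simp add: numeral_eq_Suc)
      moreover have "m^(n-4) \<ge> 1" using m5 by simp
      moreover have "m * m * 1 \<le> m * m * m^(n-4)"
        using \<open>m^(n-4) \<ge> 1\<close> m5 by (intro mult_left_mono) auto
      ultimately show ?thesis by simp
    qed
    have mm: "m * m \<ge> 5 * 5" using m5 by (intro mult_mono) auto
    have Epos: "E > 0" using Em mm by linarith
    have epos: "e > 0" unfolding e_def using Epos by simp
    have eE: "e * E = 1" unfolding e_def using Epos by simp
    have mn: "m^n = m * m * E" unfolding E_def using n3 by simp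
    have em: "e * m < 1"
    proof -
      have "m * 1 < m * m" using m5 by (intro mult_strict_left_mono) auto
      hence mE: "m < E" using Em by linarith
      have "e * m < e * E" using mult_strict_left_mono[OF mE epos] .
      thus ?thesis using eE by simp
    qed
    have e1m: "e * 1 \<le> e * m" using m5 epos by (intro mult_left_mono) auto
    hence y1: "y > 1" unfolding y_def using em m5 by linarith
    have eLm: "e \<le> m" using e1m em m5 by linarith
    have bern: "(1 + (- e / m))^n \<ge> 1 + real n * (- e / m)"
      by (rule Bernoulli_inequality) (use em m5 epos eLm in \<open>simp add: field_simps\<close>)
    have yn: "y^n = m^n * (1 + (- e/m))^n"
      unfolding y_def using m5 by (simp add: power_mult_distrib[symmetric] field_simps)
    have "y^n \<ge> m^n * (1 - real n * e / m)"
      using yn bern m5 by (simp add: mult_left_mono)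
    hence "e * y^n \<ge> e * (m^n * (1 - real n * e / m))"
      using epos by (simp add: mult_left_mono)
    also have "e * (m^n * (1 - real n * e / m)) = m*m - real n * e * m"
    proof -
      have "e * (m * m * E * (1 - real n * e / m)) = (e * E) * (m*m - real n * e * m)"
        using m5 by (simp add: field_simps)
      thus ?thesis unfolding mn eE by simp
    qed
    finally have ey: "e * y^n \<ge> m*m - real n * e * m" .
    have key: "(real n - 1) * e * m < 1"
    proof -
      have "real n - 1 < m" unfolding m_def using assms by simp
      hence "(real n - 1) * m < m * m" using m5 by simp
      also have "\<dots> \<le> E" using Em .
      finally have "(real n - 1) * m < E" .
      hence "e * ((real n - 1) * m) < e * E" using epos by simp
      thus ?thesis using eE by (simp add: algebra_simps)
    qed
    have py: "p y = - e * y^n + m * y - 1"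
      unfolding p_def y_def by (simp add: algebra_simps)
    have my: "m * y = m * m - e * m" unfolding y_def by (simp add: algebra_simps)
    have kk: "(real n - 1) * e * m = real n * e * m - e * m" by (simp add: algebra_simps)
    have "p y < 0"
      using py my ey key kk by linarith
    have Qy: "poly (Q n) y < 0"
    proof (rule ccontr)
      assume "\<not> poly (Q n) y < 0"
      hence "poly (Q n) y * (y-1) \<ge> 0" using y1 by simp
      thus False using PQ[of y] \<open>p y < 0\<close> by linarith
    qed
    obtain r where r: "y < r" "r < m" "poly (Q n) r = 0" using poly_IVT_pos[OF _ Qy Qm] epos y_def by auto
    have "r > 1" using r y1 by linarith
    hence "r = l" using uq[of r l] r l by blast
    moreover have "y = 2 * real n - 1 - 1 / (2 * real n - 1) ^ (n - 2)"
      unfolding y_def e_def E_def m_def by simp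
    moreover have "m = 2 * real n - 1" unfolding m_def by simp
    ultimately show "2 * real n - 1 - 1 / (2 * real n - 1) ^ (n - 2) < l \<and> l < 2 * real n - 1"
      using r ul by simp
  qed
  show ?thesis using U B by blast
qed

end
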